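(* The randomized mechanism that always outputs the uniform distribution over $[0,1]$ is an $\mathcal O(\sqrt n)$-approximation for the minimum utility: there is an absolute constant $C$ such that for every $n\ge 2$ and every profile $\mathbf x\in[0,1]^n$, $$\max_{z\in[0,1]}\min_i|x_i-z|\le C\sqrt n\;\mathbb E_{y\sim U[0,1]}\Big[\min_i |x_i-y|\Big].$$
   Context: Agents $i=1,\dots,n$ at locations $x_i\in[0,1]$ receive utility $|x_i-y|$ from an obnoxious facility at $y\in[0,1]$. The minimum-utility objective (the $L_{-\infty}$ social utility) of $y$ is $\min_i|x_i-y|$; a randomized mechanism's value is the expectation of this objective over its output distribution. *)

theory Defs
  imports "HOL-Probability.Probability"
begin

definition min_util :: "nat \<Rightarrow> (nat \<Rightarrow> real) \<Rightarrow> real \<Rightarrow> real" where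
  "min_util n x y = Min ((\<lambda>i. \<bar>x i - y\<bar>) ` {..<n})"

end

theory Submission
  imports Defs
begin

lemma mu_facts:
  assumes "n \<ge> 1"
  shows "min_util n x y \<ge> 0"
    and "\<And>i. i < n \<Longrightarrow> min_util n x y \<le> \<bar>x i - y\<bar>"
    and "\<And>c. (c \<le> min_util n x y) = (\<forall>i<n. c \<le> \<bar>x i - y\<bar>)"
proof -
  have ne: "(\<lambda>i. \<bar>x i - y\<bar>) ` {..<n} \<noteq> {}"
  proof -
    have "0 \<in> {..<n}" using assms by simp
    then show ?thesis by blast
  qed
  show "\<And>c. (c \<le> min_util n x y) = (\<forall>i<n. c \<le> \<bar>x i - y\<bar>)"
    unfolding min_util_def using ne by (subst Min_ge_iff) auto
  then show "min_util n x y \<ge> 0" by auto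
  show "\<And>i. i < n \<Longrightarrow> min_util n x y \<le> \<bar>x i - y\<bar>"
    unfolding min_util_def by (rule Min_le) auto
qed

lemma mu_meas: "min_util n x \<in> borel_measurable borel"
  unfolding min_util_def by measurable

lemma unif_eq: "uniform_measure lborel {0..1::real} = density lborel (\<lambda>y. ennreal (indicator {0..1} y))"
  unfolding uniform_measure_def
  by (rule density_cong) (auto simp: indicator_def)

theorem theorem5:
  shows "\<exists>C::real. \<forall>n::nat. \<forall>x::nat \<Rightarrow> real.
           n \<ge> 2 \<longrightarrow> (\<forall>i<n. x i \<in> {0..1}) \<longrightarrow>
           (SUP z\<in>{0..1::real}. min_util n x z)
             \<le> C * sqrt (real n) *
               (\<integral>y. min_util n x y \<partial>(uniform_measure lborel {0..1::real}))"
proof (intro exI allI impI)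
  fix n :: nat and x :: "nat \<Rightarrow> real"
  assume n2: "n \<ge> 2" and xin: "\<forall>i<n. x i \<in> {0..1}"
  have n1: "n \<ge> 1" using n2 by simp
  define f where "f = min_util n x"
  define h where "h = (\<lambda>y. indicator {0..1::real} y * f y)"
  note F = mu_facts[OF n1, where x=x, folded f_def]
  have fm: "f \<in> borel_measurable lborel" unfolding f_def using mu_meas by simp
  have E: "(\<integral>y. min_util n x y \<partial>(uniform_measure lborel {0..1::real})) = integral\<^sup>L lborel h"
    unfolding unif_eq h_def f_def[symmetric]
    using mu_meas[of n x] by (subst integral_density) (auto simp: fm f_def)
  have f1: "f y \<le> 1" if "y \<in> {0..1}" for y
  proof -
    have "f y \<le> \<bar>x 0 - y\<bar>" using F(2)[of 0] n1 by simp
    also have "\<dots> \<le> 1" using xin n1 that by auto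
    finally show ?thesis .
  qed
  have hint: "integrable lborel h"
  proof (rule Bochner_Integration.integrable_bound)
    show "integrable lborel (indicator {0..1::real} :: real \<Rightarrow> real)"
      by (rule integrable_real_indicator) (auto simp: emeasure_lborel_Icc_eq)
    show "h \<in> borel_measurable lborel" unfolding h_def using fm by measurable
    show "AE y in lborel. norm (h y) \<le> norm (indicator {0..1::real} y :: real)"
      using f1 F(1) by (auto simp: h_def indicator_def)
  qed
  have h0: "h y \<ge> 0" for y using F(1) by (auto simp: h_def)
  define Ev where "Ev = integral\<^sup>L lborel h"
  have Ev0: "Ev \<ge> 0" unfolding Ev_def using h0 by simp
  define t where "t = 1 / (4 * real n)"
  have tpos: "t > 0" using n1 by (simp add: t_def)
  define g where "g = (\<lambda>y. t * indicator {0..1::real} y - (\<Sum>i<n. t * indicator {x i - t..x i + t} y))"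
  have gint: "integrable lborel g" unfolding g_def
    by (intro Bochner_Integration.integrable_diff Bochner_Integration.integrable_sum
        Bochner_Integration.integrable_mult_right integrable_real_indicator) (auto simp: emeasure_lborel_Icc_eq)
  have gle: "g y \<le> h y" for y
  proof (cases "\<exists>i<n. y \<in> {x i - t..x i + t}")
    case True
    then obtain i where i: "i < n" "y \<in> {x i - t..x i + t}" by blast
    have "t * indicator {x i - t..x i + t} y \<le> (\<Sum>i<n. t * indicator {x i - t..x i + t} y)"
      by (rule member_le_sum[where f="\<lambda>i. t * indicator {x i - t..x i + t} y"]) (use i tpos in auto)
    then have "g y \<le> 0" using i tpos unfolding g_def by (auto simp: indicator_def)
    then show ?thesis using h0[of y] by simp
  next
    case False
    then have s0: "(\<Sum>i<n. t * indicator {x i - t..x i + t} y) = 0"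
      by (intro sum.neutral) auto
    have gy: "g y = t * indicator {0..1} y" unfolding g_def s0 by simp
    show ?thesis
    proof (cases "y \<in> {0..1}")
      case True
      have "t \<le> f y" using False F(3)[of t y] by force
      then show ?thesis using True gy by (simp add: h_def)
    next
      case False
      then show ?thesis using gy by (simp add: h_def)
    qed
  qed
  have gval: "integral\<^sup>L lborel g = t - real n * t * (2 * t)"
  proof -
    have ii: "integrable lborel (\<lambda>y. t * indicator {x i - t..x i + t} y :: real)" for i
      by (intro Bochner_Integration.integrable_mult_right integrable_real_indicator) (auto simp: emeasure_lborel_Icc_eq)
    have i0: "integrable lborel (\<lambda>y. t * indicator {0..1::real} y :: real)"
      by (intro Bochner_Integration.integrable_mult_right integrable_real_indicator) (auto simp: emeasure_lborel_Icc_eq)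
    have v: "integral\<^sup>L lborel (\<lambda>y. t * indicator {x i - t..x i + t} y :: real) = t * (2 * t)" for i
      using tpos by simp
    have "integral\<^sup>L lborel g = integral\<^sup>L lborel (\<lambda>y. t * indicator {0..1::real} y :: real)
       - (\<Sum>i<n. integral\<^sup>L lborel (\<lambda>y. t * indicator {x i - t..x i + t} y :: real))"
    proof -
      have isum: "integrable lborel (\<lambda>y. \<Sum>i<n. t * indicator {x i - t..x i + t} y :: real)"
        by (rule Bochner_Integration.integrable_sum) (rule ii)
      show ?thesis unfolding g_def
        by (simp only: Bochner_Integration.integral_diff[OF i0 isum] Bochner_Integration.integral_sum[OF ii])
    qed
    also have "\<dots> = t - real n * t * (2 * t)" unfolding v by simp
    finally show ?thesis .
  qed
  have B: "1 \<le> 8 * real n * Ev"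
  proof -
    have "t - real n * t * (2 * t) \<le> Ev" unfolding Ev_def using integral_mono[OF gint hint gle] gval by simp
    moreover have "t - real n * t * (2 * t) = 1 / (8 * real n)" using n1
      by (simp add: t_def field_simps)
    ultimately have "1 / (8 * real n) \<le> Ev" by simp
    then show ?thesis using n1 by (simp add: divide_le_eq mult.commute)
  qed
  show "(SUP z\<in>{0..1::real}. min_util n x z) \<le> 6 * sqrt (real n) * (\<integral>y. min_util n x y \<partial>(uniform_measure lborel {0..1::real}))"
    unfolding E Ev_def[symmetric]
  proof (rule cSUP_least)
    show "{0..1::real} \<noteq> {}" by simp
    fix z :: real assume z: "z \<in> {0..1}"
    define M where "M = f z"
    have M0: "M \<ge> 0" using F(1) by (simp add: M_def)
    obtain a where aJ: "{a..a + M/2} \<subseteq> {0..1}" and az: "a \<le> z" "z \<le> a + M/2"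
    proof (cases "x 0 \<ge> z")
      case True
      have "M \<le> \<bar>x 0 - z\<bar>" unfolding M_def using F(2)[of 0] n1 by simp
      then have "z + M/2 \<le> 1" using True xin n1 M0 by auto
      then show ?thesis using that[of z] z M0 by auto
    next
      case False
      have "M \<le> \<bar>x 0 - z\<bar>" unfolding M_def using F(2)[of 0] n1 by simp
      then have "z - M/2 \<ge> 0" using False xin n1 M0 by auto
      then show ?thesis using that[of "z - M/2"] z M0 by auto
    qed
    define k where "k = (\<lambda>y. M/2 * indicator {a..a + M/2} y :: real)"
    have kint: "integrable lborel k" unfolding k_def
      by (intro Bochner_Integration.integrable_mult_right integrable_real_indicator) (auto simp: emeasure_lborel_Icc_eq)
    have kle: "k y \<le> h y" for y
    proof (cases "y \<in> {a..a + M/2}")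
      case True
      have "M/2 \<le> f y" unfolding F(3)
      proof (intro allI impI)
        fix i assume "i < n"
        then have "M \<le> \<bar>x i - z\<bar>" unfolding M_def using F(2) by simp
        moreover have "\<bar>y - z\<bar> \<le> M/2" unfolding abs_le_iff using True az by auto
        ultimately show "M/2 \<le> \<bar>x i - y\<bar>" by linarith
      qed
      then show ?thesis using True aJ by (auto simp: k_def h_def)
    next
      case False
      then show ?thesis using h0[of y] by (simp add: k_def)
    qed
    have "integral\<^sup>L lborel k = M/2 * (M/2)" unfolding k_def using M0 by simp
    then have A: "M * M \<le> 4 * Ev" unfolding Ev_def using integral_mono[OF kint hint kle] by simp
    have "M\<^sup>2 \<le> (6 * sqrt (real n) * Ev)\<^sup>2"
    proof -
      have "M * M * 1 \<le> (4 * Ev) * (8 * real n * Ev)"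
        using A B M0 Ev0 by (intro mult_mono[OF A B]) auto
      also have "\<dots> \<le> 36 * real n * Ev * Ev" using Ev0 by (simp add: mult_right_mono)
      also have "\<dots> = (6 * sqrt (real n) * Ev)\<^sup>2" by (simp add: power2_eq_square power_mult_distrib)
      finally show ?thesis by (simp add: power2_eq_square)
    qed
    then have "M \<le> 6 * sqrt (real n) * Ev"
      by (rule power2_le_imp_le) (use Ev0 in simp)
    then show "min_util n x z \<le> 6 * sqrt (real n) * Ev" by (simp add: M_def f_def)
  qed
qed

end
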